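(* Let $\Omega\subset\mathbb{R}^2$ be compact with non-empty interior. If $h\ge 2\,\mathrm{diam}(\Omega)$, then $\Omega$ has a unique solid angle center of height $h$.
   Context: $A_\Omega^{(h)}(x)=\int_\Omega \frac{h}{(|y-x|^2+h^2)^{3/2}}\,dy$ for $x\in\mathbb{R}^2$, $h>0$; a solid angle center of $\Omega$ of height $h$ is a point maximizing $A_\Omega^{(h)}$ over $\mathbb{R}^2$. *)

theory Defs
  imports "HOL-Analysis.Analysis"
begin

definition solid_angle :: "(real^2) set \<Rightarrow> real \<Rightarrow> real^2 \<Rightarrow> real" where
  "solid_angle \<Omega> h x = integral \<Omega> (\<lambda>y. h / ((norm (y - x))\<^sup>2 + h\<^sup>2) powr (3/2))"

definition solid_angle_center :: "(real^2) set \<Rightarrow> real \<Rightarrow> real^2 \<Rightarrow> bool" where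
  "solid_angle_center \<Omega> h c \<longleftrightarrow> (\<forall>x. solid_angle \<Omega> h x \<le> solid_angle \<Omega> h c)"

end

theory Submission
  imports Defs
begin

lemma midpoint_strict_scalar:
  fixes A B C h :: real
  assumes C: "C > 0" and CS: "B^2 \<le> A * C" and h: "h > 0"
    and q0: "A \<le> h^2/4" and q1: "A - 2*B + C \<le> h^2/4"
  shows "(A + h^2) powr (-3/2) + (A - 2*B + C + h^2) powr (-3/2)
         < 2 * (A - B + C/4 + h^2) powr (-3/2)"
proof -
  define P where "P t = A - 2*B*t + C*t^2 + h^2" for t :: real
  define f where "f t = P t powr (-3/2)" for t
  define f' where "f' t = (-3/2) * P t powr (-5/2) * (2*C*t - 2*B)" for t
  define f'' where "f'' t = (-3/2) * ((-5/2) * P t powr (-7/2) * (2*C*t - 2*B) * (2*C*t - 2*B)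
       + P t powr (-5/2) * (2*C))" for t
  have Ppos: "P t > 0" for t
  proof -
    have "C * (A - 2*B*t + C*t^2) = (C*t - B)^2 + (A*C - B^2)"
      by (simp add: algebra_simps power2_eq_square)
    also have "\<dots> \<ge> 0" using CS by simp
    finally have "A - 2*B*t + C*t^2 \<ge> 0" using C
      by (simp add: zero_le_mult_iff)
    then show ?thesis unfolding P_def using h by (simp add: add_nonneg_pos)
  qed
  have dP: "(P has_real_derivative (2*C*t - 2*B)) (at t)" for t
    unfolding P_def[abs_def]
    by (auto intro!: derivative_eq_intros simp: algebra_simps)
  have df: "(f has_real_derivative f' t) (at t)" for t
  proof -
    have "((\<lambda>t. P t powr (-3/2)) has_real_derivative (-3/2) * P t powr (-3/2 - of_nat 1) * (2*C*t - 2*B)) (at t)"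
      by (rule DERIV_fun_powr[OF dP Ppos])
    then show ?thesis unfolding f_def[abs_def] f'_def by simp
  qed
  have df': "(f' has_real_derivative f'' t) (at t)" for t
  proof -
    have d1: "((\<lambda>t. P t powr (-5/2)) has_real_derivative (-5/2) * P t powr (-5/2 - of_nat 1) * (2*C*t - 2*B)) (at t)"
      by (rule DERIV_fun_powr[OF dP Ppos])
    have d2: "((\<lambda>t. 2*C*t - 2*B) has_real_derivative 2*C) (at t)"
      by (auto intro!: derivative_eq_intros)
    have D: "((\<lambda>t. (-3/2) * (P t powr (-5/2) * (2*C*t - 2*B))) has_real_derivative
       (-3/2) * ((-5/2) * P t powr (-5/2 - of_nat 1) * (2*C*t - 2*B) * (2*C*t - 2*B) + 2*C * P t powr (-5/2))) (at t)"
      by (rule DERIV_cmult[OF DERIV_mult[OF d1 d2]])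
    have eq1: "f' = (\<lambda>t. (-3/2) * (P t powr (-5/2) * (2*C*t - 2*B)))"
      by (auto simp: f'_def fun_eq_iff)
    have eq2: "(-3/2) * ((-5/2) * P t powr (-5/2 - of_nat 1) * (2*C*t - 2*B) * (2*C*t - 2*B) + 2*C * P t powr (-5/2)) = f'' t"
      by (simp add: f''_def algebra_simps)
    show ?thesis using D unfolding eq1 eq2 .
  qed
  have neg: "f'' t < 0" if t: "0 < t" "t < 1" for t
  proof -
    have qlt: "A - 2*B*t + C*t^2 < h^2/4"
    proof -
      have "A - 2*B*t + C*t^2 = (1-t)*A + t*(A - 2*B + C) + C*t*(t-1)"
        by (simp add: algebra_simps power2_eq_square)
      moreover have "C*t*(t-1) < 0" using C t by (simp add: mult_pos_neg)
      moreover have "(1-t)*A + t*(A - 2*B + C) \<le> (1-t)*(h^2/4) + t*(h^2/4)"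
        using q0 q1 t by (intro add_mono mult_left_mono) auto
      moreover have "(1-t)*(h^2/4) + t*(h^2/4) = h^2/4" by (simp add: field_simps)
      ultimately show ?thesis by linarith
    qed
    have sq: "(C*t - B)^2 \<le> C * (A - 2*B*t + C*t^2)"
    proof -
      have "C * (A - 2*B*t + C*t^2) = (C*t - B)^2 + (A*C - B^2)"
        by (simp add: algebra_simps power2_eq_square)
      then show ?thesis using CS by simp
    qed
    have br: "15 * (C*t - B)^2 - 3 * C * P t < 0"
    proof -
      have "15 * (C*t - B)^2 \<le> 15 * (C * (A - 2*B*t + C*t^2))" using sq by simp
      moreover have "C * (A - 2*B*t + C*t^2) < C * (h^2/4)" using qlt C by simp
      ultimately show ?thesis unfolding P_def by (simp add: algebra_simps)
    qed
    have e: "P t powr (-5/2) = P t * P t powr (-7/2)"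
    proof -
      have "P t powr (-5/2) = P t powr (1 + (-7/2))" by simp
      also have "\<dots> = P t powr 1 * P t powr (-7/2)" by (rule powr_add)
      finally show ?thesis using Ppos[of t] by simp
    qed
    have "f'' t = P t powr (-7/2) * (15 * (C*t - B)^2 - 3 * C * P t)"
      unfolding f''_def e by (simp add: field_simps power2_eq_square)
    moreover have "P t powr (-7/2) > 0" using Ppos[of t] by simp
    ultimately show ?thesis using br by (simp add: mult_pos_neg)
  qed
  obtain x1 where x1: "0 < x1" "x1 < 1/2" "f (1/2) - f 0 = (1/2 - 0) * f' x1"
    using MVT2[of 0 "1/2" f f'] df by auto
  obtain x2 where x2: "1/2 < x2" "x2 < 1" "f 1 - f (1/2) = (1 - 1/2) * f' x2"
    using MVT2[of "1/2" 1 f f'] df by auto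
  have "f' x1 > f' x2"
    by (rule DERIV_neg_imp_decreasing) (use x1 x2 df' neg in \<open>auto intro!: exI[of _ "f'' _"]\<close>)
  then have "f 0 + f 1 < 2 * f (1/2)" using x1 x2 by simp
  moreover have "P 0 = A + h^2" "P 1 = A - 2*B + C + h^2" "P (1/2) = A - B + C/4 + h^2"
    unfolding P_def by (simp_all add: power2_eq_square)
  ultimately show ?thesis unfolding f_def by simp
qed

definition kern :: "real \<Rightarrow> real^2 \<Rightarrow> real" where
  "kern h z = h / ((norm z)\<^sup>2 + h\<^sup>2) powr (3/2)"

lemma kern_alt: "kern h z = h * ((norm z)\<^sup>2 + h\<^sup>2) powr (-3/2)"
proof -
  have "((norm z)\<^sup>2 + h\<^sup>2) powr (-3/2) = 1 / ((norm z)\<^sup>2 + h\<^sup>2) powr (3/2)"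
    using powr_minus_divide[of "(norm z)\<^sup>2 + h\<^sup>2" "3/2"] by simp
  then show ?thesis by (simp add: kern_def)
qed

lemma kern_pos: "h > 0 \<Longrightarrow> kern h z > 0"
  unfolding kern_def by (simp add: add_nonneg_pos)

lemma kern_bound: "h > 0 \<Longrightarrow> kern h z \<le> h / (h\<^sup>2) powr (3/2)"
  unfolding kern_def
  by (intro divide_left_mono powr_mono2) (auto simp: add_nonneg_pos)

lemma kern_strict: assumes "h > 0" "norm a < norm b" shows "kern h b < kern h a"
proof -
  have "(norm a)\<^sup>2 < (norm b)\<^sup>2" using assms by (simp add: power_strict_mono)
  then have "((norm a)\<^sup>2 + h\<^sup>2) powr (3/2) < ((norm b)\<^sup>2 + h\<^sup>2) powr (3/2)"
    by (intro powr_less_mono2) auto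
  moreover have "((norm a)\<^sup>2 + h\<^sup>2) powr (3/2) > 0" using assms by (simp add: add_nonneg_pos)
  ultimately show ?thesis unfolding kern_def using assms
    by (intro divide_strict_left_mono) auto
qed

lemma kern_cont: "h > 0 \<Longrightarrow> continuous_on S (\<lambda>y. kern h (g y))" if "continuous_on S g"
  unfolding kern_def using that
  by (intro continuous_intros) (auto simp: add_nonneg_pos)

lemma nsq: "(norm (z - t *\<^sub>R d))\<^sup>2 = z \<bullet> z - 2*t*(z \<bullet> d) + t\<^sup>2*(d \<bullet> d)"
proof -
  have "(norm (z - t *\<^sub>R d))\<^sup>2 = (z - t *\<^sub>R d) \<bullet> (z - t *\<^sub>R d)" by (rule power2_norm_eq_inner)
  also have "\<dots> = z \<bullet> z - t * (z \<bullet> d) - t * (d \<bullet> z) + t * t * (d \<bullet> d)"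
    by (simp add: inner_diff_left inner_diff_right algebra_simps)
  also have "\<dots> = z \<bullet> z - 2*t*(z \<bullet> d) + t\<^sup>2*(d \<bullet> d)"
    by (simp add: inner_commute[of d z] power2_eq_square)
  finally show ?thesis .
qed

lemma integrable_cont_compact:
  fixes f :: "real^2 \<Rightarrow> real"
  assumes "compact S" "continuous_on S f"
  shows "f integrable_on S"
  using set_borel_integral_eq_integral(1)[of S f] borel_integrable_compact[OF assms]
  unfolding set_integrable_def by blast

lemma integral_pos_lemma:
  fixes f :: "real^2 \<Rightarrow> real"
  assumes S: "compact S" "interior S \<noteq> {}" and f: "continuous_on S f" and pos: "\<And>y. y \<in> S \<Longrightarrow> 0 < f y"
  shows "0 < integral S f"
proof -
  obtain x where x: "x \<in> interior S" using S by auto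
  obtain a b where ab: "cbox a b \<subseteq> interior S" "x \<in> box a b" "\<forall>i\<in>Basis. a \<bullet> i < b \<bullet> i"
    using open_contains_cbox[OF open_interior x] by blast
  have sub: "cbox a b \<subseteq> S" using ab(1) interior_subset by blast
  have ne: "cbox a b \<noteq> {}" using ab(2) box_subset_cbox by blast
  have fc: "continuous_on (cbox a b) f" using f sub continuous_on_subset by blast
  obtain z where z: "z \<in> cbox a b" "\<And>y. y \<in> cbox a b \<Longrightarrow> f z \<le> f y"
    using continuous_attains_inf[OF compact_cbox ne fc] by blast
  have "0 < measure lborel (cbox a b) * f z"
    using content_pos_lt[OF ab(3)] pos[of z] z sub by auto
  also have "\<dots> = integral (cbox a b) (\<lambda>_. f z)" by simp
  also have "\<dots> \<le> integral (cbox a b) f"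
    by (intro integral_le integrable_continuous fc z) auto
  also have "\<dots> \<le> integral S f"
    by (intro integral_subset_le sub integrable_continuous fc integrable_cont_compact S f)
       (use pos in \<open>auto intro: less_imp_le\<close>)
  finally show ?thesis .
qed

theorem corollary4p4:
  fixes \<Omega> :: "(real^2) set" and h :: real
  assumes "compact \<Omega>" and "interior \<Omega> \<noteq> {}"
    and "h > 0" and "h \<ge> 2 * diameter \<Omega>"
  shows "\<exists>!c. solid_angle_center \<Omega> h c"
proof -
  note cpt = assms(1) and int = assms(2) and hpos = assms(3)
  have Dle: "diameter \<Omega> \<le> h/2" using assms(4) by simp
  have Omne: "\<Omega> \<noteq> {}" using int interior_subset by blast
  have bdd: "bounded \<Omega>" using cpt compact_imp_bounded by blast
  define K where "K = (\<Inter>y\<in>\<Omega>. cball y (h/2))"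
  have Kmem: "x \<in> K \<longleftrightarrow> (\<forall>y\<in>\<Omega>. dist y x \<le> h/2)" for x
    unfolding K_def by auto
  have OmK: "\<Omega> \<subseteq> K"
  proof
    fix x assume x: "x \<in> \<Omega>"
    show "x \<in> K" unfolding Kmem
    proof
      fix y assume "y \<in> \<Omega>"
      then have "dist y x \<le> diameter \<Omega>" by (rule diameter_bounded_bound[OF bdd _ x])
      then show "dist y x \<le> h/2" using Dle by linarith
    qed
  qed
  have Kne: "K \<noteq> {}" using OmK Omne by blast
  have Kclosed: "closed K" unfolding K_def by (intro closed_INT) auto
  have Kconv: "convex K" unfolding K_def by (intro convex_INT) auto
  obtain y0 where y0: "y0 \<in> \<Omega>" using Omne by blast
  have Kbdd: "bounded K"
    using bounded_cball[of y0 "h/2"] by (rule bounded_subset) (use y0 in \<open>auto simp: K_def\<close>)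
  have Kcpt: "compact K" using Kclosed Kbdd by (simp add: compact_eq_bounded_closed)
  define SA where "SA = solid_angle \<Omega> h"
  have SA_eq: "SA x = integral \<Omega> (\<lambda>y. kern h (y - x))" for x
    by (simp add: SA_def solid_angle_def kern_def)
  have kc: "continuous_on \<Omega> (\<lambda>y. kern h (y - x))" for x
    by (intro kern_cont hpos continuous_intros)
  have kint: "(\<lambda>y. kern h (y - x)) integrable_on \<Omega>" for x
    by (intro integrable_cont_compact cpt kc)
  have kiscont: "isCont (kern h) z" for z
  proof -
    have "continuous_on UNIV (\<lambda>y. kern h (id y))"
      by (intro kern_cont hpos continuous_intros)
    then show ?thesis by (simp add: continuous_on_eq_continuous_at)
  qed
  have SAcont: "continuous_on UNIV SA"
  proof (rule continuous_on_sequentiallyI)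
    fix x :: "nat \<Rightarrow> real^2" and a
    assume xa: "x \<longlonglongrightarrow> a"
    have "(\<lambda>n. integral \<Omega> (\<lambda>y. kern h (y - x n))) \<longlonglongrightarrow> integral \<Omega> (\<lambda>y. kern h (y - a))"
    proof (rule dominated_convergence(2)[where h="\<lambda>_. h / (h\<^sup>2) powr (3/2)"])
      show "(\<lambda>y. kern h (y - x n)) integrable_on \<Omega>" for n by (rule kint)
      show "(\<lambda>_. h / (h\<^sup>2) powr (3/2)) integrable_on \<Omega>"
        by (intro integrable_cont_compact cpt continuous_intros)
      show "norm (kern h (y - x n)) \<le> h / (h\<^sup>2) powr (3/2)" if "y \<in> \<Omega>" for n y
        using kern_pos[OF hpos] kern_bound[OF hpos] by (simp add: less_imp_le)
      show "(\<lambda>n. kern h (y - x n)) \<longlonglongrightarrow> kern h (y - a)" if "y \<in> \<Omega>" for y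
        by (rule isCont_tendsto_compose[OF kiscont]) (intro tendsto_intros xa)
    qed
    then show "(\<lambda>n. SA (x n)) \<longlonglongrightarrow> SA a" by (simp add: SA_eq)
  qed
  have proj: "SA x < SA (closest_point K x)" if xK: "x \<notin> K" for x
  proof -
    define p where "p = closest_point K x"
    have pK: "p \<in> K" unfolding p_def by (rule closest_point_in_set[OF Kclosed Kne])
    have xp: "x \<noteq> p" using pK xK by blast
    have lt: "kern h (y - x) < kern h (y - p)" if y: "y \<in> \<Omega>" for y
    proof -
      have yK: "y \<in> K" using y OmK by blast
      have dot: "(x - p) \<bullet> (y - p) \<le> 0"
        unfolding p_def by (rule closest_point_dot[OF Kconv Kclosed yK])
      have "y - x = (y - p) - 1 *\<^sub>R (x - p)" by simp
      then have "(norm (y - x))\<^sup>2 = (y - p) \<bullet> (y - p) - 2 * ((y - p) \<bullet> (x - p)) + (x - p) \<bullet> (x - p)"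
        using nsq[of "y - p" 1 "x - p"] by simp
      moreover have "(x - p) \<bullet> (x - p) > 0" using xp by simp
      moreover have "(y - p) \<bullet> (x - p) \<le> 0" using dot by (simp add: inner_commute)
      moreover have "(norm (y - p))\<^sup>2 = (y - p) \<bullet> (y - p)" by (simp add: power2_norm_eq_inner)
      ultimately have "(norm (y - p))\<^sup>2 < (norm (y - x))\<^sup>2" by linarith
      then have "norm (y - p) < norm (y - x)" by (rule power2_less_imp_less) simp
      then show ?thesis by (rule kern_strict[OF hpos])
    qed
    have "0 < integral \<Omega> (\<lambda>y. kern h (y - p) - kern h (y - x))"
      by (rule integral_pos_lemma[OF cpt int]) (use kc lt in \<open>auto intro!: continuous_intros\<close>)
    also have "\<dots> = SA p - SA x" by (simp add: integral_diff[OF kint kint] SA_eq)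
    finally show ?thesis unfolding p_def by simp
  qed
  have projK: "closest_point K x \<in> K" for x by (rule closest_point_in_set[OF Kclosed Kne])
  have centerK: "c \<in> K" if "solid_angle_center \<Omega> h c" for c
  proof (rule ccontr)
    assume "c \<notin> K"
    then have "SA c < SA (closest_point K c)" by (rule proj)
    moreover have "SA (closest_point K c) \<le> SA c"
      using that unfolding solid_angle_center_def SA_def by blast
    ultimately show False by simp
  qed
  obtain c where cK: "c \<in> K" and cmax: "\<And>x. x \<in> K \<Longrightarrow> SA x \<le> SA c"
    using continuous_attains_sup[OF Kcpt Kne continuous_on_subset[OF SAcont]] by blast
  have ex: "solid_angle_center \<Omega> h c"
    unfolding solid_angle_center_def
  proof
    fix x
    show "solid_angle \<Omega> h x \<le> solid_angle \<Omega> h c"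
    proof (cases "x \<in> K")
      case True then show ?thesis using cmax unfolding SA_def by blast
    next
      case False
      then have "SA x < SA (closest_point K x)" by (rule proj)
      also have "\<dots> \<le> SA c" by (rule cmax[OF projK])
      finally show ?thesis unfolding SA_def by simp
    qed
  qed
  have uniq: "c1 = c2" if c1: "solid_angle_center \<Omega> h c1" and c2: "solid_angle_center \<Omega> h c2" for c1 c2
  proof (rule ccontr)
    assume ne: "c1 \<noteq> c2"
    have c1K: "c1 \<in> K" and c2K: "c2 \<in> K" using centerK c1 c2 by auto
    define m where "m = c1 + (1/2) *\<^sub>R (c2 - c1)"
    have pt: "kern h (y - c1) + kern h (y - c2) < 2 * kern h (y - m)" if y: "y \<in> \<Omega>" for y
    proof -
      define z where "z = y - c1"
      define d where "d = c2 - c1"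
      have C: "d \<bullet> d > 0" using ne unfolding d_def by simp
      have CS: "(z \<bullet> d)\<^sup>2 \<le> (z \<bullet> z) * (d \<bullet> d)" by (rule Cauchy_Schwarz_ineq)
      have e1: "y - c1 = z - 0 *\<^sub>R d" by (simp add: z_def)
      have e2: "y - c2 = z - 1 *\<^sub>R d" by (simp add: z_def d_def)
      have e3: "y - m = z - (1/2) *\<^sub>R d" by (simp add: z_def d_def m_def algebra_simps)
      have n1: "(norm (y - c1))\<^sup>2 = z \<bullet> z" unfolding e1 nsq by simp
      have n2: "(norm (y - c2))\<^sup>2 = z \<bullet> z - 2 * (z \<bullet> d) + d \<bullet> d" unfolding e2 nsq by simp
      have n3: "(norm (y - m))\<^sup>2 = z \<bullet> z - z \<bullet> d + (d \<bullet> d)/4" unfolding e3 nsq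
        by (simp add: power2_eq_square)
      have b1: "(norm (y - c1))\<^sup>2 \<le> h\<^sup>2/4"
      proof -
        have "norm (y - c1) \<le> h/2" using c1K y unfolding Kmem by (simp add: dist_norm)
        then have "(norm (y - c1))\<^sup>2 \<le> (h/2)\<^sup>2" by (intro power_mono) auto
        then show ?thesis by (simp add: power_divide)
      qed
      have b2: "(norm (y - c2))\<^sup>2 \<le> h\<^sup>2/4"
      proof -
        have "norm (y - c2) \<le> h/2" using c2K y unfolding Kmem by (simp add: dist_norm)
        then have "(norm (y - c2))\<^sup>2 \<le> (h/2)\<^sup>2" by (intro power_mono) auto
        then show ?thesis by (simp add: power_divide)
      qed
      have "(z \<bullet> z + h\<^sup>2) powr (-3/2) + (z \<bullet> z - 2 * (z \<bullet> d) + d \<bullet> d + h\<^sup>2) powr (-3/2)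
         < 2 * (z \<bullet> z - z \<bullet> d + (d \<bullet> d)/4 + h\<^sup>2) powr (-3/2)"
        by (rule midpoint_strict_scalar[OF C CS hpos]) (use b1 b2 n1 n2 in auto)
      then have "h * ((z \<bullet> z + h\<^sup>2) powr (-3/2) + (z \<bullet> z - 2 * (z \<bullet> d) + d \<bullet> d + h\<^sup>2) powr (-3/2))
         < h * (2 * (z \<bullet> z - z \<bullet> d + (d \<bullet> d)/4 + h\<^sup>2) powr (-3/2))"
        using hpos by (intro mult_strict_left_mono) auto
      then show ?thesis unfolding kern_alt n1 n2 n3 by (simp add: algebra_simps)
    qed
    have "0 < integral \<Omega> (\<lambda>y. (kern h (y - m) - kern h (y - c1)) + (kern h (y - m) - kern h (y - c2)))"
      apply (rule integral_pos_lemma[OF cpt int])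
       apply (intro continuous_intros kc)
      subgoal for y using pt[of y] by linarith
      done
    also have "\<dots> = (SA m - SA c1) + (SA m - SA c2)"
      by (simp only: integral_add[OF integrable_diff[OF kint kint] integrable_diff[OF kint kint]]
          integral_diff[OF kint kint] SA_eq)
    finally have "0 < (SA m - SA c1) + (SA m - SA c2)" .
    moreover have "SA m \<le> SA c1" "SA m \<le> SA c2"
      using c1 c2 unfolding solid_angle_center_def SA_def by auto
    ultimately show False by simp
  qed
  show ?thesis using ex uniq by blast
qed

end
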